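(* Let $a\ge 2$ be even, and let $c,e$ be odd integers with $0<c<e\le\frac a2$. Then $U=\{(a,-a),(c,-c),(e,-e)\}\subseteq\mathcal{B}$ is unavoidable.
   Context: The bicyclic inverse semigroup is $\mathcal{B}=\{(a,b)\in\mathbb{Z}\times\mathbb{Z}\mid a\ge 0,\ a+b\ge 0\}$ with multiplication $(a,b)(c,d)=(\max\{c+d,a\}-d,\ b+d)$. A subset $U\subseteq\mathcal{B}$ is called avoidable if $\mathcal{B}$ can be partitioned into two subsets $A$ and $B$ such that no element of $U$ can be written as a product $xy$ of two distinct elements $x\neq y$ both in $A$, or both in $B$. A set is unavoidable if it is not avoidable. *)

theory Defs
  imports Main
begin

definition bicyclic :: "(int \<times> int) set" where
  "bicyclic = {(a, b). a \<ge> 0 \<and> a + b \<ge> 0}"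

definition bmult :: "int \<times> int \<Rightarrow> int \<times> int \<Rightarrow> int \<times> int" where
  "bmult x y = (case x of (a, b) \<Rightarrow> case y of (c, d) \<Rightarrow> (max (c + d) a - d, b + d))"

definition avoidable :: "(int \<times> int) set \<Rightarrow> bool" where
  "avoidable U \<longleftrightarrow> (\<exists>A B. A \<union> B = bicyclic \<and> A \<inter> B = {} \<and>
     (\<forall>x\<in>A. \<forall>y\<in>A. x \<noteq> y \<longrightarrow> bmult x y \<notin> U) \<and>
     (\<forall>x\<in>B. \<forall>y\<in>B. x \<noteq> y \<longrightarrow> bmult x y \<notin> U))"

definition unavoidable :: "(int \<times> int) set \<Rightarrow> bool" where
  "unavoidable U \<longleftrightarrow> \<not> avoidable U"

end

theory Submission
  imports Defs
begin

theorem proposition3p4: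
  fixes a c e :: int
  assumes "a \<ge> 2" and "even a" and "odd c" and "odd e"
    and "0 < c" and "c < e" and "2 * e \<le> a"
  shows "unavoidable {(a, -a), (c, -c), (e, -e)}"
proof -
  obtain p where p: "a = 2*p" using assms(2) by blast
  obtain q where q: "c = 2*q+1" using assms(3) oddE by blast
  obtain r where r: "e = 2*r+1" using assms(4) oddE by blast
  define x1 where "x1 = (p - r + q, -(p - r + q))"
  define x2 where "x2 = (p + r - q, -(p + r - q))"
  define y where "y = (0::int, p - r - q - 1)"
  let ?U = "{(a, -a), (c, -c), (e, -e)}"
  have in1: "x1 \<in> bicyclic" "x2 \<in> bicyclic" "y \<in> bicyclic"
    using assms p q r by (auto simp: bicyclic_def x1_def x2_def y_def)
  have d: "x1 \<noteq> x2" "x1 \<noteq> y" "x2 \<noteq> y"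
    using assms p q r by (auto simp: x1_def x2_def y_def)
  have m: "bmult x1 x2 \<in> ?U" "bmult x1 y \<in> ?U" "bmult x2 y \<in> ?U"
    using assms p q r by (auto simp: bmult_def x1_def x2_def y_def max_def)
  show ?thesis
    unfolding unavoidable_def avoidable_def
  proof
    assume "\<exists>A B. A \<union> B = bicyclic \<and> A \<inter> B = {} \<and>
     (\<forall>x\<in>A. \<forall>y\<in>A. x \<noteq> y \<longrightarrow> bmult x y \<notin> ?U) \<and>
     (\<forall>x\<in>B. \<forall>y\<in>B. x \<noteq> y \<longrightarrow> bmult x y \<notin> ?U)"
    then obtain A B where AB: "A \<union> B = bicyclic"
      and hA: "\<forall>x\<in>A. \<forall>y\<in>A. x \<noteq> y \<longrightarrow> bmult x y \<notin> ?U"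
      and hB: "\<forall>x\<in>B. \<forall>y\<in>B. x \<noteq> y \<longrightarrow> bmult x y \<notin> ?U" by blast
    have "x1 \<in> A \<or> x1 \<in> B" "x2 \<in> A \<or> x2 \<in> B" "y \<in> A \<or> y \<in> B"
      using in1 AB by blast+
    then show False using hA hB d m by blast
  qed
qed

end
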